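(* For $n\ge1$, $\lambda\in\mathbb J_n$ and $\mu\in\mathbb J_{n+1}$, $$1_{(\lambda\prec\mu)}=\det[\phi_n(\widetilde\lambda_i,\widetilde\mu_j)]_{i,j=1}^{r_{n+1}}\times\begin{cases}2^{-r_{n+1}},&n\text{ even},\\1,&n\text{ odd}.\end{cases}$$
   Context: $r_n=\lfloor(n+1)/2\rfloor$; $\mathbb J_n$ is the set of partitions $\lambda=(\lambda_1\ge\dots\ge\lambda_{r_n}\ge0)$ of integers, with the convention $\lambda_i=0$ for $i>r_n$. $\widetilde\lambda_i=\lambda_i+r_n-i$ for $\lambda\in\mathbb J_n$ (so if $n$ is even, $\widetilde\lambda_{r_{n+1}}=\widetilde\lambda_{r_n+1}=-1$), and $\widetilde\mu_j=\mu_j+r_{n+1}-j$ for $\mu\in\mathbb J_{n+1}$. $\lambda\prec\mu$ means $\mu_1\ge\lambda_1\ge\mu_2\ge\lambda_2\ge\dots\ge\mu_{r_n}\ge\lambda_{r_n}\ge\mu_{r_n+1}$. $\phi_n(s,t)=2\cdot1_{(s<t)}$ if $n$ even and $1_{(s\le t)}$ if $n$ odd. *)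

theory Defs
  imports Complex_Main "Jordan_Normal_Form.Determinant"
begin

definition rr :: "nat \<Rightarrow> nat" where
  "rr n = (n + 1) div 2"

(* J_n: partitions lam_1 >= ... >= lam_{r_n} >= 0, stored as nat => nat indexed
   from 1, with the convention lam_i = 0 for i > r_n (lam 0 is unused). *)
definition in_J :: "nat \<Rightarrow> (nat \<Rightarrow> nat) \<Rightarrow> bool" where
  "in_J n lam \<longleftrightarrow> (\<forall>i. 1 \<le> i \<and> i < rr n \<longrightarrow> lam (i + 1) \<le> lam i) \<and>
                    (\<forall>i. rr n < i \<longrightarrow> lam i = 0)"

definition tld :: "nat \<Rightarrow> (nat \<Rightarrow> nat) \<Rightarrow> nat \<Rightarrow> int" where
  "tld n lam i = int (lam i) + int (rr n) - int i"

definition interlace :: "nat \<Rightarrow> (nat \<Rightarrow> nat) \<Rightarrow> (nat \<Rightarrow> nat) \<Rightarrow> bool" where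
  "interlace n lam mu \<longleftrightarrow> (\<forall>i. 1 \<le> i \<and> i \<le> rr n \<longrightarrow> lam i \<le> mu i \<and> mu (i + 1) \<le> lam i)"

definition phi :: "nat \<Rightarrow> int \<Rightarrow> int \<Rightarrow> real" where
  "phi n s t = (if even n then (if s < t then 2 else 0) else (if s \<le> t then 1 else 0))"

end

theory Submission
  imports Defs
begin

lemma det_staircase:
  fixes x :: "'a :: comm_ring_1"
  assumes down: "\<And>i j j'. i<m \<Longrightarrow> j<m \<Longrightarrow> j' \<le> j \<Longrightarrow> P i j \<Longrightarrow> P i j'"
  and up: "\<And>i i' j. i' < m \<Longrightarrow> j<m \<Longrightarrow> i \<le> i' \<Longrightarrow> P i j \<Longrightarrow> P i' j"
  shows "det (mat m m (\<lambda>(i,j). if P i j then x else 0)) =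
     (if \<forall>i<m. P i i \<and> (i+1<m \<longrightarrow> \<not> P i (i+1)) then x^m else 0)"
proof -
  let ?A = "mat m m (\<lambda>(i,j). if P i j then x else 0) :: 'a mat"
  have A: "?A \<in> carrier_mat m m" by simp
  show ?thesis
  proof (cases "\<forall>i<m. P i i \<and> (i+1<m \<longrightarrow> \<not> P i (i+1))")
    case True
    have "det ?A = prod_list (diag_mat ?A)"
    proof (rule det_lower_triangular[OF _ A])
      fix i j assume ij: "i < j" "j < m"
      have "\<not> P i (i+1)" using True ij by auto
      hence "\<not> P i j" using down[of i j "i+1"] ij by auto
      thus "?A $$ (i,j) = 0" using ij by auto
    qed
    also have "\<dots> = (\<Prod>i = 0..<m. x)" unfolding prod_list_diag_prod
      using True by (intro prod.cong) auto
    finally show ?thesis using True by simp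
  next
    case False
    show ?thesis
    proof (cases "(\<exists>i<m. \<not> P i 0) \<or> (\<exists>i. i+1<m \<and> (\<forall>j<m. P i j = P (i+1) j))")
      case True
      then show ?thesis
      proof
        assume "\<exists>i<m. \<not> P i 0"
        then obtain k where k: "k < m" "\<not> P k 0" by auto
        have zr: "\<And>j. j < m \<Longrightarrow> \<not> P k j" using down k by blast
        have "?A = mat\<^sub>r m m (\<lambda>i. if i = k then 0\<^sub>v m else row ?A i)"
          by (rule eq_matI) (auto simp: zr)
        hence "det ?A = 0" using det_row_0[OF k(1), of "\<lambda>i. row ?A i"] by auto
        thus ?thesis using False by (simp only: if_False if_P if_not_P)
      next
        assume "\<exists>i. i+1<m \<and> (\<forall>j<m. P i j = P (i+1) j)"
        then obtain k where k: "k+1 < m" "\<forall>j<m. P k j = P (k+1) j" by auto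
        have "row ?A k = row ?A (k+1)"
          by (rule eq_vecI) (use k in auto)
        hence "det ?A = 0" by (intro det_identical_rows[OF A, of k "k+1"]) (use k in auto)
        thus ?thesis using False by (simp only: if_False if_P if_not_P)
      qed
    next
      case nz: False
      have diff: "\<And>i. i+1 < m \<Longrightarrow> \<exists>j<m. P (i+1) j \<and> \<not> P i j"
      proof -
        fix i assume i: "i+1<m"
        then obtain j where j: "j<m" "P i j \<noteq> P (i+1) j" using nz by blast
        thus "\<exists>j<m. P (i+1) j \<and> \<not> P i j" using up[of "i+1" j i] i by auto
      qed
      have diag: "\<And>i. i < m \<Longrightarrow> P i i"
      proof -
        fix i show "i < m \<Longrightarrow> P i i"
        proof (induction i)
          case 0 then show ?case using nz by auto
        next
          case (Suc i)
          then obtain j where j: "j<m" "P (i+1) j" "\<not> P i j" using diff[of i] by auto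
          have Pii: "P i i" using Suc by auto
          have "i < j"
          proof (rule ccontr)
            assume "\<not> i < j"
            hence "j \<le> i" by simp
            hence "P i j" using down[of i i j] Pii Suc by auto
            thus False using j by simp
          qed
          thus ?case using down[of "Suc i" j "Suc i"] j Suc by auto
        qed
      qed
      have Q: "\<And>k. k < m \<Longrightarrow> \<forall>j. m-1-k < j \<and> j < m \<longrightarrow> \<not> P (m-1-k) j"
      proof -
        fix k show "k < m \<Longrightarrow> \<forall>j. m-1-k < j \<and> j < m \<longrightarrow> \<not> P (m-1-k) j"
        proof (induction k)
          case 0 then show ?case by auto
        next
          case (Suc k)
          define i where "i = m - 1 - Suc k"
          have ii: "m-1-k = i+1" "i+1 < m" using Suc.prems unfolding i_def by auto
          obtain j where j: "j<m" "P (i+1) j" "\<not> P i j" using diff[OF ii(2)] by auto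
          have "j \<le> i+1"
          proof (rule ccontr)
            assume "\<not> j \<le> i+1"
            hence "m-1-k < j" using ii by simp
            hence "\<not> P (m-1-k) j" using Suc.IH Suc.prems j by simp
            thus False using ii j by simp
          qed
          show ?case unfolding i_def[symmetric]
          proof (intro allI impI)
            fix j' assume j': "i < j' \<and> j' < m"
            show "\<not> P i j'"
            proof
              assume "P i j'"
              hence "P i j" using down[of i j' j] j' \<open>j \<le> i+1\<close> by auto
              thus False using j by simp
            qed
          qed
        qed
      qed
      have "\<forall>i<m. P i i \<and> (i+1<m \<longrightarrow> \<not> P i (i+1))"
      proof (intro allI impI conjI)
        fix i assume i: "i < m" "i + 1 < m"
        show "\<not> P i (i+1)" using Q[of "m-1-i"] i by auto
      qed (use diag in auto)
      with False show ?thesis by blast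
    qed
  qed
qed


lemma inJ_mono:
  assumes "in_J n lam" "1 \<le> a" "a \<le> b" "b \<le> rr n + 1"
  shows "lam b \<le> lam a"
  using assms(3,4)
proof (induction b rule: dec_induct)
  case base then show ?case by simp
next
  case (step c)
  show ?case
  proof (cases "Suc c = rr n + 1")
    case True
    hence "lam (Suc c) = 0" using assms(1) unfolding in_J_def by auto
    thus ?thesis by simp
  next
    case False
    hence "c < rr n" using step by simp
    hence "lam (c+1) \<le> lam c" using assms(1,2) step(1) unfolding in_J_def by auto
    thus ?thesis using step by simp
  qed
qed

lemma interlace_shift:
  "interlace n lam mu \<longleftrightarrow> (\<forall>i<rr n. lam (i+1) \<le> mu (i+1) \<and> mu (i+2) \<le> lam (i+1))"
  unfolding interlace_def
proof (intro iffI allI impI)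
  fix i assume H: "\<forall>i. 1 \<le> i \<and> i \<le> rr n \<longrightarrow> lam i \<le> mu i \<and> mu (i + 1) \<le> lam i" and i: "i < rr n"
  show "lam (i+1) \<le> mu (i+1) \<and> mu (i+2) \<le> lam (i+1)" using H[rule_format, of "i+1"] i by simp
next
  fix i assume H: "\<forall>i<rr n. lam (i+1) \<le> mu (i+1) \<and> mu (i+2) \<le> lam (i+1)" and i: "1 \<le> i \<and> i \<le> rr n"
  have e: "i - 1 + 1 = i" "i - 1 + 2 = i + 1" using i by auto
  show "lam i \<le> mu i \<and> mu (i + 1) \<le> lam i" using H[rule_format, of "i-1"] i unfolding e by auto
qed

theorem lemma3p2:
  fixes n :: nat and lam mu :: "nat \<Rightarrow> nat"
  assumes "n \<ge> 1" and "in_J n lam" and "in_J (n + 1) mu"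
  shows "(if interlace n lam mu then 1 else 0 :: real) =
         det (mat (rr (n + 1)) (rr (n + 1))
               (\<lambda>(i, j). phi n (tld n lam (i + 1)) (tld (n + 1) mu (j + 1))))
         * (if even n then 1 / 2 ^ rr (n + 1) else 1)"
proof -
  define m where "m = rr (n+1)"
  define a where "a i = tld n lam (i+1)" for i
  define b where "b j = tld (n+1) mu (j+1)" for j
  have mm: "m = rr n \<or> m = rr n + 1" unfolding m_def rr_def by presburger
  have adec: "a i' \<le> a i" if "i \<le> i'" "i' < m" for i i'
  proof -
    have "lam (i'+1) \<le> lam (i+1)" using inJ_mono[OF assms(2), of "i+1" "i'+1"] that mm by auto
    thus ?thesis using that unfolding a_def tld_def by linarith
  qed
  have bdec: "b j \<le> b j'" if "j' \<le> j" "j < m" for j j'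
  proof -
    have "mu (j+1) \<le> mu (j'+1)" using inJ_mono[OF assms(3), of "j'+1" "j+1"] that unfolding m_def by auto
    thus ?thesis using that unfolding b_def tld_def by linarith
  qed
  have mu0: "mu (m+1) = 0" using assms(3) unfolding in_J_def m_def by auto
  show ?thesis
  proof (cases "even n")
    case True
    have mk: "m = rr n + 1" "rr (n+1) = rr n + 1" unfolding m_def rr_def using True by presburger+
    have lam0: "lam (rr n + 1) = 0" using assms(2) unfolding in_J_def by auto
    have M: "(\<lambda>(i, j). phi n (tld n lam (i + 1)) (tld (n + 1) mu (j + 1))) =
             (\<lambda>(i,j). if a i < b j then 2 else (0::real))"
      unfolding a_def b_def phi_def using True by auto
    have D: "det (mat m m (\<lambda>(i,j). if a i < b j then 2 else (0::real))) =
      (if \<forall>i<m. a i < b i \<and> (i+1<m \<longrightarrow> \<not> a i < b (i+1)) then 2^m else 0)"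
      by (rule det_staircase) (use adec bdec in force)+
    have c1: "a i < b i \<longleftrightarrow> lam (i+1) \<le> mu (i+1)" if "i < m" for i
      using that mk unfolding a_def b_def tld_def by auto
    have c2: "\<not> a i < b (i+1) \<longleftrightarrow> mu (i+2) \<le> lam (i+1)" if "i+1 < m" for i
      using that mk unfolding a_def b_def tld_def by auto
    have C: "(\<forall>i<m. a i < b i \<and> (i+1<m \<longrightarrow> \<not> a i < b (i+1))) \<longleftrightarrow> interlace n lam mu"
      unfolding interlace_shift
    proof (intro iffI allI impI)
      fix i assume H: "\<forall>i<m. a i < b i \<and> (i+1<m \<longrightarrow> \<not> a i < b (i+1))" and i: "i < rr n"
      show "lam (i+1) \<le> mu (i+1) \<and> mu (i+2) \<le> lam (i+1)"
        using H[rule_format, of i] c1[of i] c2[of i] i mk by auto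
    next
      fix i assume H: "\<forall>i<rr n. lam (i+1) \<le> mu (i+1) \<and> mu (i+2) \<le> lam (i+1)" and i: "i < m"
      show "a i < b i \<and> (i+1<m \<longrightarrow> \<not> a i < b (i+1))"
      proof (cases "i < rr n")
        case True thus ?thesis using H[rule_format, of i] c1[of i] c2[of i] i by auto
      next
        case False
        hence "i = rr n" using i mk by auto
        thus ?thesis using c1[of i] i lam0 mk by auto
      qed
    qed
    show ?thesis unfolding M m_def[symmetric] D C using True by simp
  next
    case False
    have mk: "m = rr n" "rr (n+1) = rr n" unfolding m_def rr_def using False by presburger+
    have M: "(\<lambda>(i, j). phi n (tld n lam (i + 1)) (tld (n + 1) mu (j + 1))) =
             (\<lambda>(i,j). if a i \<le> b j then 1 else (0::real))"
      unfolding a_def b_def phi_def using False by auto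
    have D: "det (mat m m (\<lambda>(i,j). if a i \<le> b j then 1 else (0::real))) =
      (if \<forall>i<m. a i \<le> b i \<and> (i+1<m \<longrightarrow> \<not> a i \<le> b (i+1)) then 1^m else 0)"
      by (rule det_staircase) (use adec bdec in force)+
    have c1: "a i \<le> b i \<longleftrightarrow> lam (i+1) \<le> mu (i+1)" if "i < m" for i
      using that mk unfolding a_def b_def tld_def by auto
    have c2: "\<not> a i \<le> b (i+1) \<longleftrightarrow> mu (i+2) \<le> lam (i+1)" if "i+1 < m" for i
      using that mk unfolding a_def b_def tld_def by auto
    have C: "(\<forall>i<m. a i \<le> b i \<and> (i+1<m \<longrightarrow> \<not> a i \<le> b (i+1))) \<longleftrightarrow> interlace n lam mu"
      unfolding interlace_shift
    proof (intro iffI allI impI)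
      fix i assume H: "\<forall>i<m. a i \<le> b i \<and> (i+1<m \<longrightarrow> \<not> a i \<le> b (i+1))" and i: "i < rr n"
      show "lam (i+1) \<le> mu (i+1) \<and> mu (i+2) \<le> lam (i+1)"
      proof (cases "i+1 < m")
        case True thus ?thesis using H[rule_format, of i] c1[of i] c2[of i] i mk by auto
      next
        case False
        hence "i + 2 = m + 1" using i mk by auto
        thus ?thesis using H[rule_format, of i] c1[of i] i mk mu0 by auto
      qed
    next
      fix i assume H: "\<forall>i<rr n. lam (i+1) \<le> mu (i+1) \<and> mu (i+2) \<le> lam (i+1)" and i: "i < m"
      show "a i \<le> b i \<and> (i+1<m \<longrightarrow> \<not> a i \<le> b (i+1))"
        using H[rule_format, of i] c1[of i] c2[of i] i mk by auto
    qed
    show ?thesis unfolding M m_def[symmetric] D C using False by simp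
  qed
qed

end
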